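(* Let $k$ be odd and $m$ a positive integer. For $i=1,\dots,k$ let $A_i=(a_{i,1},a_{i,2},\dots,a_{i,m})$ be a sequence with entries from a two-element set of symbols, and let $P=(a_{1,1},a_{2,1},\dots,a_{k,1},a_{1,2},a_{2,2},\dots,a_{k,2},\dots,a_{1,m},\dots,a_{k,m})$. Then $f(P)\le (k-1)m+\min\{f(A_i):1\le i\le k\}$.
   Context: For a finite sequence $X=(x_1,\dots,x_M)$ of symbols from a two-element set, $f(X)=|\{i\in\{1,\dots,M\}: x_i\ne x_{i+1}\}|$, where $x_{M+1}=x_1$ (i.e. the number of cyclic changes of symbol). *)

theory Defs
  imports Main
begin

text \<open>Number of cyclic changes of symbol in a finite sequence (list) X = (x_1,...,x_M),
  with x_(M+1) = x_1. Symbols from a two-element set are modelled by bool.\<close>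
definition cyc_changes :: "bool list \<Rightarrow> nat" where
  "cyc_changes xs = card {i. i < length xs \<and> xs ! i \<noteq> xs ! ((i + 1) mod length xs)}"

end

theory Submission
  imports Defs
begin

lemma parity_ch:
  fixes g :: "nat \<Rightarrow> bool"
  shows "(\<Sum>i\<in>{s..<s+k}. (of_bool (g i \<noteq> g (Suc i))::nat)) mod 2 = of_bool (g s \<noteq> g (s+k))"
proof (induction k)
  case 0 then show ?case by simp
next
  case (Suc k)
  have "(\<Sum>i\<in>{s..<s+Suc k}. (of_bool (g i \<noteq> g (Suc i))::nat))
     = (\<Sum>i\<in>{s..<s+k}. (of_bool (g i \<noteq> g (Suc i))::nat)) + of_bool (g (s+k) \<noteq> g (Suc (s+k)))"
    by simp
  moreover have "\<And>S::nat. S mod 2 = of_bool (g s \<noteq> g (s+k)) \<Longrightarrow>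
     (S + of_bool (g (s+k) \<noteq> g (Suc (s+k)))) mod 2 = of_bool (g s \<noteq> g (s+Suc k))"
    by (cases "g s"; cases "g (s+k)"; cases "g (Suc (s+k))") (auto simp: mod_Suc)
  ultimately show ?case using Suc.IH by (simp del: sum_of_bool_eq)
qed

lemma block_bound:
  fixes g :: "nat \<Rightarrow> bool"
  assumes "odd k"
  shows "(\<Sum>i\<in>{s..<s+k}. (of_bool (g i \<noteq> g (Suc i))::nat)) \<le> (k - 1) + of_bool (g s \<noteq> g (s+k))"
proof -
  let ?S = "(\<Sum>i\<in>{s..<s+k}. (of_bool (g i \<noteq> g (Suc i))::nat))"
  have le: "?S \<le> k"
  proof -
    have "?S \<le> (\<Sum>i\<in>{s..<s+k}. (1::nat))" by (rule sum_mono) simp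
    then show ?thesis by simp
  qed
  have p: "?S mod 2 = of_bool (g s \<noteq> g (s+k))" by (rule parity_ch)
  show ?thesis
  proof (cases "g s \<noteq> g (s+k)")
    case True then show ?thesis using le by simp
  next
    case False
    then have "even ?S" using p by (simp del: sum_of_bool_eq add: even_iff_mod_2_eq_zero)
    then have "?S \<noteq> k" using assms by auto
    then show ?thesis using le False by simp
  qed
qed

lemma shift_sum:
  fixes h :: "nat \<Rightarrow> nat"
  assumes per: "\<And>t. h (t + N) = h t"
  shows "(\<Sum>i<N. h (i + r)) = (\<Sum>i<N. h i)"
proof (induction r)
  case 0 then show ?case by simp
next
  case (Suc r)
  have "(\<Sum>i<Suc N. h (i + r)) = h (0 + r) + (\<Sum>i<N. h (Suc i + r))"
    by (rule sum.lessThan_Suc_shift)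
  moreover have "(\<Sum>i<Suc N. h (i + r)) = (\<Sum>i<N. h (i + r)) + h (N + r)" by simp
  moreover have "h (N + r) = h r" using per[of r] by (simp add: add.commute)
  ultimately have "(\<Sum>i<N. h (Suc i + r)) = (\<Sum>i<N. h (i + r))" by simp
  then show ?case using Suc by simp
qed

theorem lemma5p4:
  fixes k m :: nat and a :: "nat \<Rightarrow> nat \<Rightarrow> bool"
  assumes "odd k" and "m > 0"
  shows "cyc_changes (map (\<lambda>t. a (t mod k) (t div k)) [0..<k * m])
     \<le> (k - 1) * m + Min ((\<lambda>i. cyc_changes (map (a i) [0..<m])) ` {0..<k})"
proof -
  have kpos: "k > 0" using assms(1) by (cases k) auto
  define N where "N = k * m"
  have Npos: "N > 0" using kpos assms(2) by (simp add: N_def)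
  define b where "b t = a (t mod k) ((t div k) mod m)" for t
  have bper: "b (t + N) = b t" for t
  proof -
    have "(t + k*m) div k = t div k + m" using kpos by simp
    then show ?thesis unfolding b_def N_def by simp
  qed
  define h where "h t = (of_bool (b t \<noteq> b (Suc t)) :: nat)" for t
  have hper: "h (t + N) = h t" for t
    unfolding h_def using bper[of t] bper[of "Suc t"] by simp
  define L where "L = map (\<lambda>t. a (t mod k) (t div k)) [0..<k * m]"
  have lenL: "length L = N" by (simp add: L_def N_def)
  have Lnth: "L ! t = b t" if "t < N" for t
  proof -
    have "t div k < m" using that kpos by (simp add: N_def less_mult_imp_div_less mult.commute)
    then show ?thesis using that by (simp add: L_def N_def b_def)
  qed
  have fL: "cyc_changes L = (\<Sum>i<N. h i)"
  proof -
    have "{i. i < length L \<and> L ! i \<noteq> L ! ((i + 1) mod length L)} = {..<N} \<inter> {i. b i \<noteq> b (Suc i)}"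
    proof (intro set_eqI iffI)
      fix i assume "i \<in> {i. i < length L \<and> L ! i \<noteq> L ! ((i + 1) mod length L)}"
      then have i: "i < N" "L ! i \<noteq> L ! ((i + 1) mod N)" using lenL by auto
      have "b ((i+1) mod N) = b (Suc i)"
      proof (cases "Suc i = N")
        case True then show ?thesis using bper[of 0] by simp
      next
        case False then show ?thesis using i by simp
      qed
      then show "i \<in> {..<N} \<inter> {i. b i \<noteq> b (Suc i)}" using i Lnth Npos by auto
    next
      fix i assume "i \<in> {..<N} \<inter> {i. b i \<noteq> b (Suc i)}"
      then have i: "i < N" "b i \<noteq> b (Suc i)" by auto
      have "b ((i+1) mod N) = b (Suc i)"
      proof (cases "Suc i = N")
        case True then show ?thesis using bper[of 0] by simp
      next
        case False then show ?thesis using i by simp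
      qed
      then show "i \<in> {i. i < length L \<and> L ! i \<noteq> L ! ((i + 1) mod length L)}"
        using i Lnth Npos lenL by auto
    qed
    then show ?thesis unfolding cyc_changes_def h_def by simp
  qed
  have main: "cyc_changes L \<le> (k - 1) * m + cyc_changes (map (a r) [0..<m])" if r: "r < k" for r
  proof -
    have "cyc_changes L = (\<Sum>i<N. h (i + r))" using fL shift_sum[of h N r] hper by simp
    also have "\<dots> = (\<Sum>j<m. \<Sum>i\<in>{j*k..<j*k+k}. h (i + r))"
      unfolding N_def by (simp add: sum.nat_group mult.commute)
    also have "\<dots> = (\<Sum>j<m. \<Sum>i\<in>{j*k+r..<j*k+r+k}. h i)"
    proof (rule sum.cong[OF refl])
      fix j
      show "(\<Sum>i\<in>{j*k..<j*k+k}. h (i + r)) = (\<Sum>i\<in>{j*k+r..<j*k+r+k}. h i)"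
        using sum.shift_bounds_nat_ivl[of h "j*k" r "j*k+k"] by (simp add: add_ac)
    qed
    also have "\<dots> \<le> (\<Sum>j<m. (k - 1) + of_bool (a r j \<noteq> a r ((j+1) mod m)))"
    proof (rule sum_mono)
      fix j assume j: "j \<in> {..<m}"
      have "(\<Sum>i\<in>{j*k+r..<j*k+r+k}. h i) \<le> (k - 1) + of_bool (b (j*k+r) \<noteq> b (j*k+r+k))"
        unfolding h_def by (rule block_bound[OF assms(1)])
      moreover have "b (j*k+r) = a r j"
        using r j kpos by (simp add: b_def)
      moreover have "b (j*k+r+k) = a r ((j+1) mod m)"
      proof -
        have eq: "j*k+r+k = r + (j+1)*k" by simp
        have d: "(r + (j+1)*k) div k = (j+1) + r div k" using kpos by (intro div_mult_self1) simp
        have D: "(j*k+r+k) div k = j+1" unfolding eq d using r by simp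
        have m: "(r + (j+1)*k) mod k = r mod k" by (rule mod_mult_self1)
        have M: "(j*k+r+k) mod k = r" unfolding eq m using r by simp
        show ?thesis unfolding b_def D M by simp
      qed
      ultimately show "(\<Sum>i\<in>{j*k+r..<j*k+r+k}. h i) \<le> (k - 1) + of_bool (a r j \<noteq> a r ((j+1) mod m))"
        by simp
    qed
    also have "\<dots> = (k - 1) * m + (\<Sum>j<m. (of_bool (a r j \<noteq> a r ((j+1) mod m))::nat))"
      by (simp add: sum.distrib mult.commute)
    also have "(\<Sum>j<m. (of_bool (a r j \<noteq> a r ((j+1) mod m))::nat)) = cyc_changes (map (a r) [0..<m])"
    proof -
      have "{i. i < length (map (a r) [0..<m]) \<and> map (a r) [0..<m] ! i \<noteq> map (a r) [0..<m] ! ((i + 1) mod length (map (a r) [0..<m]))}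
          = {..<m} \<inter> {j. a r j \<noteq> a r ((j+1) mod m)}"
        using assms(2) by auto
      then show ?thesis unfolding cyc_changes_def by simp
    qed
    finally show ?thesis .
  qed
  have "Min ((\<lambda>i. cyc_changes (map (a i) [0..<m])) ` {0..<k}) \<in> (\<lambda>i. cyc_changes (map (a i) [0..<m])) ` {0..<k}"
    using kpos by (intro Min_in) auto
  then obtain r where "r < k" "Min ((\<lambda>i. cyc_changes (map (a i) [0..<m])) ` {0..<k}) = cyc_changes (map (a r) [0..<m])"
    by auto
  then show ?thesis using main[of r] unfolding L_def by simp
qed

end
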